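(* For the unit-sum normalization, there is an absolute constant $C>0$ such that for every $n\ge1$ and every ordinal mechanism $J$ (deterministic or randomized, not necessarily truthful) on $n$ agents and $n$ items, $ar(J)\le C/\sqrt n$.
   Context: Agents $N=\{1,\dots,n\}$, items $M=\{1,\dots,n\}$, outcomes are bijections $\mu$ ($O$ the set of outcomes). Unit-sum valuation functions: injective $u_i:M\to\mathbb R_{\ge0}$ with $\sum_j u_i(j)=1$; $V^n$ the set of profiles. A mechanism maps each profile to a distribution over $O$; it is ordinal if its output distribution is unchanged when any one agent's valuation function is replaced by another inducing the same ordering of the items. $ar(J)=\inf_{\mathbf u\in V^n}\mathbb E[\sum_i u_i(J(\mathbf u)_i)]/\max_{\mu\in O}\sum_i u_i(\mu_i)$. *)

theory Defs
  imports "HOL-Probability.Probability" "HOL-Combinatorics.Permutations"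
begin

text \<open>Agents and items are both indexed by {0..<n}. An outcome is a bijection
  from agents to items, represented as a permutation of {..<n} (identity outside).\<close>

definition outcomes :: "nat \<Rightarrow> (nat \<Rightarrow> nat) set" where
  "outcomes n = {\<mu>. \<mu> permutes {..<n}}"

definition unit_sum_valuation :: "nat \<Rightarrow> (nat \<Rightarrow> real) \<Rightarrow> bool" where
  "unit_sum_valuation n v \<longleftrightarrow>
     inj_on v {..<n} \<and> (\<forall>j<n. 0 \<le> v j) \<and> (\<Sum>j<n. v j) = 1 \<and> (\<forall>j\<ge>n. v j = 0)"

definition profiles :: "nat \<Rightarrow> (nat \<Rightarrow> nat \<Rightarrow> real) set" where
  "profiles n = {U. (\<forall>i<n. unit_sum_valuation n (U i)) \<and> (\<forall>i\<ge>n. U i = (\<lambda>_. 0))}"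

definition mechanism :: "nat \<Rightarrow> ((nat \<Rightarrow> nat \<Rightarrow> real) \<Rightarrow> (nat \<Rightarrow> nat) pmf) \<Rightarrow> bool" where
  "mechanism n J \<longleftrightarrow> (\<forall>U\<in>profiles n. set_pmf (J U) \<subseteq> outcomes n)"

definition ordinal :: "nat \<Rightarrow> ((nat \<Rightarrow> nat \<Rightarrow> real) \<Rightarrow> (nat \<Rightarrow> nat) pmf) \<Rightarrow> bool" where
  "ordinal n J \<longleftrightarrow>
     (\<forall>U\<in>profiles n. \<forall>i<n. \<forall>v. unit_sum_valuation n v \<and>
        (\<forall>j<n. \<forall>k<n. U i j < U i k \<longleftrightarrow> v j < v k) \<longrightarrow> J (U(i := v)) = J U)"

definition welfare :: "nat \<Rightarrow> (nat \<Rightarrow> nat \<Rightarrow> real) \<Rightarrow> (nat \<Rightarrow> nat) \<Rightarrow> real" where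
  "welfare n U \<mu> = (\<Sum>i<n. U i (\<mu> i))"

definition approx_ratio :: "nat \<Rightarrow> ((nat \<Rightarrow> nat \<Rightarrow> real) \<Rightarrow> (nat \<Rightarrow> nat) pmf) \<Rightarrow> real" where
  "approx_ratio n J =
     (INF U\<in>profiles n. measure_pmf.expectation (J U) (welfare n U)
                        / Max (welfare n U ` outcomes n))"

end

theory Submission
  imports Defs
begin

definition pv :: "nat \<Rightarrow> nat \<Rightarrow> nat \<Rightarrow> real" where
  "pv n a j = (if j = a then 3 * real n else 2 * real n - real j)"
definition Sv :: "nat \<Rightarrow> nat \<Rightarrow> real" where
  "Sv n a = (\<Sum>j<n. pv n a j)"
definition lightv :: "nat \<Rightarrow> nat \<Rightarrow> nat \<Rightarrow> real" where
  "lightv n a j = (if j < n then pv n a j / Sv n a else 0)"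
definition heavyv :: "nat \<Rightarrow> nat \<Rightarrow> nat \<Rightarrow> real" where
  "heavyv n a j = (if j < n then (pv n a j + (if j = a then 3 * real n ^ 2 else 0)) / (Sv n a + 3 * real n ^ 2) else 0)"

lemma pv_gt: "j < n \<Longrightarrow> pv n a j > real n"
  by (auto simp: pv_def)
lemma pv_le: "j < n \<Longrightarrow> pv n a j \<le> 3 * real n"
  by (auto simp: pv_def)
lemma pv_nontop: "j < n \<Longrightarrow> j \<noteq> a \<Longrightarrow> pv n a j \<le> 2 * real n"
  by (auto simp: pv_def)

lemma pv_nonneg: "j < n \<Longrightarrow> pv n a j \<ge> 0"
  using pv_gt[of j n a] by linarith

lemma Sv_ge: "real n * real n \<le> Sv n a"
proof -
  have "(\<Sum>j<n. real n) \<le> (\<Sum>j<n. pv n a j)"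
    by (rule sum_mono) (use pv_gt in \<open>auto intro: less_imp_le\<close>)
  then show ?thesis by (simp add: Sv_def)
qed
lemma Sv_le: "Sv n a \<le> 3 * real n * real n"
proof -
  have "(\<Sum>j<n. pv n a j) \<le> (\<Sum>j<n. 3 * real n)"
    by (rule sum_mono) (use pv_le in auto)
  then show ?thesis by (simp add: Sv_def)
qed
lemma Sv_pos: "n \<ge> 1 \<Longrightarrow> Sv n a > 0"
proof -
  assume "n \<ge> 1"
  hence "real n * real n > 0" by simp
  thus ?thesis using Sv_ge[of n a] by linarith
qed

lemma pv_inj: "j < n \<Longrightarrow> j' < n \<Longrightarrow> pv n a j = pv n a j' \<Longrightarrow> j = j'"
  by (auto simp: pv_def split: if_splits)

lemma pv_order: "j < n \<Longrightarrow> j' < n \<Longrightarrow> M \<ge> 0 \<Longrightarrow>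
   (pv n a j < pv n a j') \<longleftrightarrow> (pv n a j + (if j = a then M else 0) < pv n a j' + (if j' = a then M else 0))"
  by (auto simp: pv_def)

lemma light_usv: assumes "n \<ge> 1" shows "unit_sum_valuation n (lightv n a)"
proof -
  have S: "Sv n a > 0" using Sv_pos assms by blast
  have "inj_on (lightv n a) {..<n}"
    using S pv_inj by (auto simp: inj_on_def lightv_def)
  moreover have "(\<Sum>j<n. lightv n a j) = 1"
    using S by (simp add: lightv_def sum_divide_distrib[symmetric] Sv_def)
  moreover have "\<forall>j<n. 0 \<le> lightv n a j" using S pv_nonneg
    by (auto simp: lightv_def intro!: divide_nonneg_pos)
  ultimately show ?thesis by (auto simp: unit_sum_valuation_def lightv_def)
qed

lemma heavy_usv: assumes "n \<ge> 1" "a < n" shows "unit_sum_valuation n (heavyv n a)"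
proof -
  have S: "Sv n a + 3 * real n ^ 2 > 0" using Sv_pos[OF assms(1), of a] by (simp add: add_pos_nonneg)
  have "inj_on (heavyv n a) {..<n}"
  proof (rule inj_onI)
    fix j j' assume j: "j \<in> {..<n}" "j' \<in> {..<n}" "heavyv n a j = heavyv n a j'"
    hence "pv n a j + (if j = a then 3 * real n ^ 2 else 0) = pv n a j' + (if j' = a then 3 * real n ^ 2 else 0)"
      using S by (simp add: heavyv_def)
    moreover have "real n ^ 2 \<ge> 0" by simp
    ultimately show "j = j'" using j pv_le[of j n a] pv_le[of j' n a] pv_inj[of j n j' a]
      by (cases "j = a"; cases "j' = a"; simp add: pv_def; linarith)
  qed
  moreover have "(\<Sum>j<n. heavyv n a j) = 1"
  proof -
    have "(\<Sum>j<n. pv n a j + (if j = a then 3 * real n ^ 2 else 0)) = Sv n a + (\<Sum>j<n. (if j = a then 3 * real n ^ 2 else 0))"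
      by (simp add: sum.distrib Sv_def)
    also have "\<dots> = Sv n a + 3 * real n ^ 2" using assms(2) by (simp add: sum.delta)
    finally show ?thesis using S by (simp add: heavyv_def sum_divide_distrib[symmetric])
  qed
  moreover have "\<forall>j<n. 0 \<le> heavyv n a j" using S pv_nonneg
    by (auto simp: heavyv_def intro!: divide_nonneg_pos add_nonneg_nonneg)
  ultimately show ?thesis by (auto simp: unit_sum_valuation_def heavyv_def)
qed

lemma light_heavy_order: assumes "n \<ge> 1" "j < n" "j' < n"
  shows "lightv n a j < lightv n a j' \<longleftrightarrow> heavyv n a j < heavyv n a j'"
proof -
  have S: "Sv n a + 3 * real n ^ 2 > 0" "Sv n a > 0" using Sv_pos[OF assms(1), of a] by (simp_all add: add_pos_nonneg)
  have "lightv n a j < lightv n a j' \<longleftrightarrow> pv n a j < pv n a j'"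
    using S assms by (simp add: lightv_def divide_less_cancel)
  also have "\<dots> \<longleftrightarrow> pv n a j + (if j = a then 3 * real n ^ 2 else 0) < pv n a j' + (if j' = a then 3 * real n ^ 2 else 0)"
    using pv_order[OF assms(2,3), of "3 * real n ^ 2" a] by simp
  also have "\<dots> \<longleftrightarrow> heavyv n a j < heavyv n a j'"
    using S assms by (simp add: heavyv_def divide_less_cancel)
  finally show ?thesis .
qed

lemma light_le: assumes "n \<ge> 1" shows "lightv n a j \<le> 3 / real n"
proof (cases "j < n")
  case True
  have S: "Sv n a \<ge> real n * real n" by (rule Sv_ge)
  have n: "real n > 0" using assms by simp
  have "pv n a j / Sv n a \<le> 3 * real n / (real n * real n)"
    using pv_le[OF True, of a] pv_nonneg[OF True, of a] S n
    by (intro frac_le) auto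
  also have "\<dots> = 3 / real n" using n by (simp add: field_simps)
  finally show ?thesis using True by (simp add: lightv_def)
next
  case False thus ?thesis by (simp add: lightv_def)
qed

lemma heavy_nontop: assumes "n \<ge> 1" "j \<noteq> a" shows "heavyv n a j \<le> 1 / real n"
proof (cases "j < n")
  case True
  have S: "Sv n a \<ge> 0" using Sv_pos[OF assms(1), of a] by simp
  have n: "real n > 0" using assms by simp
  have "pv n a j / (Sv n a + 3 * real n ^ 2) \<le> 3 * real n / (3 * real n ^ 2)"
    using pv_le[OF True, of a] pv_nonneg[OF True, of a] S n
    by (intro frac_le) auto
  also have "\<dots> = 1 / real n" using n by (simp add: field_simps power2_eq_square)
  finally show ?thesis using True assms by (simp add: heavyv_def)
next
  case False thus ?thesis using assms by (simp add: heavyv_def)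
qed


lemma heavy_top: assumes "n \<ge> 1" "a < n" shows "heavyv n a a \<ge> 1 / 2"
proof -
  have S: "Sv n a \<le> 3 * real n ^ 2" using Sv_le[of n a] by (simp add: power2_eq_square)
  have n: "real n > 0" using assms by simp
  have "1/2 \<le> (3 * real n ^ 2) / (Sv n a + 3 * real n ^ 2)"
    using S n Sv_pos[OF assms(1), of a] by (simp add: field_simps)
  also have "\<dots> \<le> (pv n a a + 3 * real n ^ 2) / (Sv n a + 3 * real n ^ 2)"
    using pv_nonneg[OF assms(2), of a] Sv_pos[OF assms(1), of a] n
    by (intro divide_right_mono) auto
  finally show ?thesis using assms by (simp add: heavyv_def)
qed

lemma perm_extend:
  assumes "finite S" "A \<subseteq> S" "inj_on f A" "f ` A \<subseteq> S"
  shows "\<exists>p. p permutes S \<and> (\<forall>x\<in>A. p x = f x)"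
proof -
  have fA: "finite A" using assms finite_subset by blast
  have cd: "card (S - A) = card (S - f ` A)"
  proof -
    have "f ` A \<subseteq> S" by (rule assms(4))
    thus ?thesis using assms fA by (simp add: card_Diff_subset card_image)
  qed
  obtain h where h: "bij_betw h (S - A) (S - f ` A)"
    using finite_same_card_bij[OF _ _ cd] assms(1) by blast
  define p where "p x = (if x \<in> A then f x else if x \<in> S then h x else x)" for x
  have img: "p ` S \<subseteq> S" using assms h by (auto simp: p_def bij_betw_def)
  have inj: "inj_on p S"
  proof (rule inj_onI)
    fix x y assume xy: "x \<in> S" "y \<in> S" "p x = p y"
    show "x = y"
    proof (cases "x \<in> A"; cases "y \<in> A")
      assume "x \<in> A" "y \<in> A" thus ?thesis using xy assms(3) by (auto simp: p_def inj_on_def)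
    next
      assume "x \<in> A" "y \<notin> A"
      hence "h y \<in> S - f ` A" using h xy by (auto simp: bij_betw_def)
      moreover have "p x \<in> f ` A" using \<open>x \<in> A\<close> by (simp add: p_def)
      moreover have "p y = h y" using \<open>y \<notin> A\<close> xy by (simp add: p_def)
      ultimately show ?thesis using xy by auto
    next
      assume "x \<notin> A" "y \<in> A"
      hence "h x \<in> S - f ` A" using h xy by (auto simp: bij_betw_def)
      moreover have "p y \<in> f ` A" using \<open>y \<in> A\<close> by (simp add: p_def)
      moreover have "p x = h x" using \<open>x \<notin> A\<close> xy by (simp add: p_def)
      ultimately show ?thesis using xy by auto
    next
      assume "x \<notin> A" "y \<notin> A"
      hence "h x = h y" using xy by (simp add: p_def)
      thus ?thesis using xy h \<open>x \<notin> A\<close> \<open>y \<notin> A\<close> by (auto simp: bij_betw_def inj_on_def)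
    qed
  qed
  have "p ` S = S" using endo_inj_surj[OF assms(1) img inj] .
  hence "bij_betw p S S" using inj by (simp add: bij_betw_def)
  hence "p permutes S" by (rule bij_imp_permutes) (use assms(2) in \<open>auto simp: p_def\<close>)
  thus ?thesis by (auto simp: p_def)
qed

lemma ind_sum_le1:
  fixes \<mu> :: "nat \<Rightarrow> nat" and b g k :: nat
  assumes "inj \<mu>"
  shows "(\<Sum>r<k. (if \<mu> (b + r) = g then 1 else 0 :: real)) \<le> 1"
proof (cases "\<exists>r0<k. \<mu> (b + r0) = g")
  case True
  then obtain r0 where r0: "r0 < k" "\<mu> (b + r0) = g" by blast
  have "(\<Sum>r<k. (if \<mu> (b + r) = g then 1 else 0 :: real)) = (\<Sum>r<k. (if r = r0 then 1 else 0 :: real))"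
  proof (rule sum.cong)
    fix r assume "r \<in> {..<k}"
    have "\<mu> (b + r) = g \<longleftrightarrow> r = r0"
    proof
      assume "\<mu> (b + r) = g"
      hence "b + r = b + r0" using r0 assms by (metis injD)
      thus "r = r0" by simp
    qed (use r0 in simp)
    thus "(if \<mu> (b + r) = g then 1 else 0 :: real) = (if r = r0 then 1 else 0)" by simp
  qed simp
  also have "\<dots> = 1" using r0 by (simp add: sum.delta)
  finally show ?thesis by simp
next
  case False
  hence "(\<Sum>r<k. (if \<mu> (b + r) = g then 1 else 0 :: real)) = 0"
    by (intro sum.neutral) auto
  thus ?thesis by simp
qed

lemma select:
  fixes D :: "(nat \<Rightarrow> nat) pmf"
  assumes "\<forall>\<mu>\<in>set_pmf D. inj \<mu>" "finite (set_pmf D)" "k \<ge> 1"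
  shows "\<exists>r<k. measure_pmf.expectation D (\<lambda>\<mu>. if \<mu> (b + r) = g then 1 else 0) \<le> 1 / real k"
proof (rule ccontr)
  assume "\<not> ?thesis"
  hence gt: "\<forall>r<k. measure_pmf.expectation D (\<lambda>\<mu>. if \<mu> (b + r) = g then 1 else 0) > 1 / real k" by auto
  have "1 = (\<Sum>r<k. 1 / real k)" using assms(3) by simp
  also have "\<dots> < (\<Sum>r<k. measure_pmf.expectation D (\<lambda>\<mu>. if \<mu> (b + r) = g then 1 else 0))"
    using gt assms(3) by (intro sum_strict_mono) (auto simp: lessThan_empty_iff)
  also have "\<dots> = measure_pmf.expectation D (\<lambda>\<mu>. \<Sum>r<k. if \<mu> (b + r) = g then 1 else 0)"
    using assms(2) by (intro Bochner_Integration.integral_sum[symmetric]) (simp add: integrable_measure_pmf_finite)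
  also have "\<dots> \<le> measure_pmf.expectation D (\<lambda>\<mu>. 1)"
    using assms(1,2) ind_sum_le1
    by (intro integral_mono_AE) (auto simp: integrable_measure_pmf_finite AE_measure_pmf_iff intro!: ind_sum_le1)
  also have "\<dots> = 1" by simp
  finally show False by simp
qed

lemma exists_k: assumes "n \<ge> (1::nat)" shows "\<exists>k\<ge>1. k * k \<le> n \<and> sqrt (real n) \<le> 2 * real k"
proof -
  define k where "k = nat \<lfloor>sqrt (real n)\<rfloor>"
  have s1: "sqrt (real n) \<ge> 1" using assms by simp
  have fl: "real_of_int \<lfloor>sqrt (real n)\<rfloor> \<le> sqrt (real n)" "sqrt (real n) < real_of_int \<lfloor>sqrt (real n)\<rfloor> + 1"
    by linarith+
  have f1: "\<lfloor>sqrt (real n)\<rfloor> \<ge> 1" using s1 by (simp add: le_floor_iff)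
  have kr: "real k = real_of_int \<lfloor>sqrt (real n)\<rfloor>" using f1 by (simp add: k_def)
  have "k \<ge> 1" using f1 k_def by linarith
  moreover have "real k * real k \<le> sqrt (real n) * sqrt (real n)"
    using fl kr by (intro mult_mono) auto
  hence "real (k * k) \<le> real n" by simp
  hence "k * k \<le> n" by linarith
  moreover have "sqrt (real n) \<le> 2 * real k" using fl kr f1 by linarith
  ultimately show ?thesis by blast
qed

lemma ordinal_chain:
  assumes ord: "ordinal n J" and UL: "UL \<in> profiles n"
    and W: "\<And>i. i < n \<Longrightarrow> unit_sum_valuation n (W i)"
    and same: "\<And>i j j'. i < n \<Longrightarrow> j < n \<Longrightarrow> j' < n \<Longrightarrow> UL i j < UL i j' \<longleftrightarrow> W i j < W i j'"
    and A: "finite A" "A \<subseteq> {..<n}"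
  shows "J (\<lambda>i. if i \<in> A then W i else UL i) = J UL \<and> (\<lambda>i. if i \<in> A then W i else UL i) \<in> profiles n"
  using A
proof (induction A rule: finite_induct)
  case empty thus ?case using UL by simp
next
  case (insert x A)
  define Q where "Q = (\<lambda>i. if i \<in> A then W i else UL i)"
  have Q: "J Q = J UL" "Q \<in> profiles n" using insert by (auto simp: Q_def)
  have x: "x < n" using insert by auto
  have eq: "(\<lambda>i. if i \<in> insert x A then W i else UL i) = Q(x := W x)"
    by (auto simp: Q_def)
  have Qx: "Q x = UL x" using insert by (simp add: Q_def)
  have "J (Q(x := W x)) = J Q"
    using ord Q(2) x W[OF x] same[OF x] Qx unfolding ordinal_def by auto
  moreover have "Q(x := W x) \<in> profiles n"
    using Q(2) x W[OF x] by (auto simp: profiles_def)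
  ultimately show ?case using Q eq by simp
qed

lemma ratio_nonneg:
  assumes "U \<in> profiles n" "mechanism n J"
  shows "measure_pmf.expectation (J U) (welfare n U) / Max (welfare n U ` outcomes n) \<ge> 0"
proof -
  have wn: "welfare n U \<mu> \<ge> 0" if "\<mu> \<in> outcomes n" for \<mu>
  proof -
    have "\<mu> i < n" if "i < n" for i using that \<open>\<mu> \<in> outcomes n\<close>
        permutes_in_image[of \<mu> "{..<n}" i] by (simp add: outcomes_def)
    thus ?thesis using assms(1) unfolding welfare_def profiles_def unit_sum_valuation_def
      by (intro sum_nonneg) auto
  qed
  have "measure_pmf.expectation (J U) (welfare n U) \<ge> 0"
    using assms wn by (intro integral_nonneg_AE) (auto simp: mechanism_def AE_measure_pmf_iff)
  moreover have "Max (welfare n U ` outcomes n) \<ge> welfare n U id"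
    by (rule Max_ge) (auto simp: outcomes_def finite_permutations permutes_id)
  moreover have "welfare n U id \<ge> 0" using wn by (simp add: outcomes_def permutes_id)
  ultimately show ?thesis by simp
qed

lemma main_bound:
  assumes n1: "n \<ge> 1" and mech: "mechanism n J" and ord: "ordinal n J"
  shows "approx_ratio n J \<le> 16 / sqrt (real n)"
proof -
  obtain k where k1: "k \<ge> 1" and kk: "k * k \<le> n" and ks: "sqrt (real n) \<le> 2 * real k"
    using exists_k[OF n1] by blast
  define top where "top i = (if i < k * k then i div k else 0)" for i
  have top_lt: "top i < k" for i
    using k1 by (auto simp: top_def less_mult_imp_div_less)
  have kn: "k \<le> n" using kk k1 by (metis le_trans mult_le_mono1 mult_1)
  define UL where "UL = (\<lambda>i. if i < n then lightv n (top i) else (\<lambda>_. 0))"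
  have UL: "UL \<in> profiles n" using light_usv[OF n1] by (auto simp: profiles_def UL_def)
  define D where "D = J UL"
  have Dout: "set_pmf D \<subseteq> outcomes n" using mech UL by (auto simp: mechanism_def D_def)
  have finD: "finite (set_pmf D)"
    using Dout by (rule finite_subset) (simp add: outcomes_def finite_permutations)
  have injD: "\<forall>\<mu>\<in>set_pmf D. inj \<mu>" using Dout by (auto simp: outcomes_def permutes_inj)
  define E where "E g = measure_pmf.expectation D (\<lambda>\<mu>. if \<mu> g = top g then 1 else 0 :: real)" for g
  define rr where "rr g = (SOME r. r < k \<and> measure_pmf.expectation D (\<lambda>\<mu>. if \<mu> (g * k + r) = g then 1 else 0 :: real) \<le> 1 / real k)" for g
  have rr: "rr g < k \<and> measure_pmf.expectation D (\<lambda>\<mu>. if \<mu> (g * k + rr g) = g then 1 else 0 :: real) \<le> 1 / real k" for g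
    unfolding rr_def by (rule someI_ex) (use select[OF injD finD k1, of "g * k" g] in blast)
  define sel where "sel g = g * k + rr g" for g
  have sel_lt: "sel g < k * k" if "g < k" for g
  proof -
    have "sel g < g * k + k" using rr[of g] by (simp add: sel_def)
    also have "\<dots> = (g + 1) * k" by simp
    also have "\<dots> \<le> k * k" using that by (intro mult_le_mono1) simp
    finally show ?thesis .
  qed
  have top_sel: "top (sel g) = g" if "g < k" for g
    using sel_lt[OF that] rr[of g] by (simp add: top_def sel_def)
  have sel_inj: "inj_on sel {..<k}"
    by (rule inj_onI) (metis lessThan_iff top_sel)
  define H where "H = sel ` {..<k}"
  have Hn: "H \<subseteq> {..<n}" using sel_lt kk by (force simp: H_def)
  have cardH: "card H = k" using sel_inj by (simp add: H_def card_image)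
  define UH where "UH = (\<lambda>i. if i \<in> H then heavyv n (top i) else UL i)"
  have chain: "J UH = J UL \<and> UH \<in> profiles n"
    unfolding UH_def
  proof (rule ordinal_chain[OF ord UL])
    show "unit_sum_valuation n (heavyv n (top i))" if "i < n" for i
      using heavy_usv[OF n1] top_lt[of i] kn by force
    show "UL i j < UL i j' \<longleftrightarrow> heavyv n (top i) j < heavyv n (top i) j'" if "i < n" "j < n" "j' < n" for i j j'
      using light_heavy_order[OF n1 that(2,3)] that by (simp add: UL_def)
    show "finite H" by (simp add: H_def)
    show "H \<subseteq> {..<n}" by (rule Hn)
  qed
  have JUH: "J UH = D" using chain by (simp add: D_def)
  have UHp: "UH \<in> profiles n" using chain by simp
  have nr: "real n > 0" using n1 by simp
  have wub: "welfare n UH \<mu> \<le> (\<Sum>g<k. if \<mu> (sel g) = g then 1 else 0) + 3" if "\<mu> \<in> outcomes n" for \<mu>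
  proof -
    have mu: "\<mu> i < n" if "i < n" for i using that \<open>\<mu> \<in> outcomes n\<close>
        permutes_in_image[of \<mu> "{..<n}" i] by (simp add: outcomes_def)
    have tm: "UH i (\<mu> i) \<le> (if i \<in> H then (if \<mu> i = top i then 1 else 0) else 0) + 3 / real n" if "i < n" for i
    proof (cases "i \<in> H")
      case True
      have usv: "unit_sum_valuation n (heavyv n (top i))" using heavy_usv[OF n1] top_lt[of i] kn by force
      show ?thesis
      proof (cases "\<mu> i = top i")
        case True
        have "heavyv n (top i) (\<mu> i) \<le> (\<Sum>j<n. heavyv n (top i) j)"
          using usv mu[OF \<open>i < n\<close>] unfolding unit_sum_valuation_def
          by (intro member_le_sum) auto
        hence "heavyv n (top i) (\<mu> i) \<le> 1" using usv by (simp add: unit_sum_valuation_def)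
        moreover have "3 / real n \<ge> 0" using nr by simp
        ultimately have "heavyv n (top i) (\<mu> i) \<le> 1 + 3 / real n" by linarith
        thus ?thesis using True \<open>i \<in> H\<close> by (simp add: UH_def)
      next
        case False
        have "heavyv n (top i) (\<mu> i) \<le> 1 / real n" using heavy_nontop[OF n1 False] .
        also have "\<dots> \<le> 3 / real n" using nr by (simp add: divide_right_mono)
        finally show ?thesis using False \<open>i \<in> H\<close> by (simp add: UH_def)
      qed
    next
      case False
      thus ?thesis using light_le[OF n1] that by (simp add: UH_def UL_def)
    qed
    have "welfare n UH \<mu> \<le> (\<Sum>i<n. (if i \<in> H then (if \<mu> i = top i then 1 else 0) else 0) + 3 / real n)"
      unfolding welfare_def by (intro sum_mono) (use tm in auto)
    also have "\<dots> = (\<Sum>i\<in>H. (if \<mu> i = top i then 1 else 0)) + 3"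
      using Hn nr by (simp add: sum.distrib sum.inter_restrict[symmetric] Int_absorb1)
    also have "(\<Sum>i\<in>H. (if \<mu> i = top i then 1 else 0)) = (\<Sum>g<k. (if \<mu> (sel g) = g then 1 else (0::real)))"
      unfolding H_def using sel_inj top_sel by (simp add: sum.reindex)
    finally show ?thesis .
  qed
  have Eub: "measure_pmf.expectation D (welfare n UH) \<le> 4"
  proof -
    have "measure_pmf.expectation D (welfare n UH) \<le> measure_pmf.expectation D (\<lambda>\<mu>. (\<Sum>g<k. if \<mu> (sel g) = g then 1 else 0) + 3)"
      using Dout wub finD by (intro integral_mono_AE) (auto simp: integrable_measure_pmf_finite AE_measure_pmf_iff)
    also have "\<dots> = (\<Sum>g<k. measure_pmf.expectation D (\<lambda>\<mu>. if \<mu> (sel g) = g then 1 else 0)) + 3"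
      using finD by (simp add: Bochner_Integration.integral_add Bochner_Integration.integral_sum integrable_measure_pmf_finite)
    also have "\<dots> \<le> (\<Sum>g<k. 1 / real k) + 3"
      using rr by (intro add_right_mono sum_mono) (simp add: sel_def)
    also have "\<dots> = 4" using k1 by simp
    finally show ?thesis .
  qed
  obtain \<mu>0 where \<mu>0: "\<mu>0 permutes {..<n}" "\<forall>x\<in>H. \<mu>0 x = top x"
    using perm_extend[of "{..<n}" H top] Hn top_lt kn
    by (force simp: H_def inj_on_def top_sel)
  have UHnn: "UH i j \<ge> 0" if "i < n" "j < n" for i j
    using UHp that by (auto simp: profiles_def unit_sum_valuation_def)
  have "real k / 2 = (\<Sum>i\<in>H. 1 / 2)" using cardH by simp
  also have "\<dots> \<le> (\<Sum>i\<in>H. UH i (\<mu>0 i))"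
  proof (rule sum_mono)
    fix i assume "i \<in> H"
    thus "1 / 2 \<le> UH i (\<mu>0 i)" using heavy_top[OF n1, of "top i"] top_lt[of i] kn \<mu>0(2)
      by (simp add: UH_def)
  qed
  also have "\<dots> \<le> welfare n UH \<mu>0"
    unfolding welfare_def using Hn
  proof (intro sum_mono2)
    fix b assume "b \<in> {..<n} - H"
    hence "b < n" "\<mu>0 b < n" using permutes_in_image[OF \<mu>0(1), of b] by auto
    thus "0 \<le> UH b (\<mu>0 b)" using UHnn by blast
  qed auto
  also have "\<dots> \<le> Max (welfare n UH ` outcomes n)"
    using \<mu>0(1) by (intro Max_ge) (auto simp: outcomes_def finite_permutations)
  finally have Mlb: "real k / 2 \<le> Max (welfare n UH ` outcomes n)" .
  have kpos: "real k > 0" using k1 by simp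
  have Enn: "measure_pmf.expectation D (welfare n UH) \<ge> 0"
  proof -
    have "Max (welfare n UH ` outcomes n) > 0" using Mlb kpos by linarith
    thus ?thesis using ratio_nonneg[OF UHp mech] JUH by (simp add: zero_le_divide_iff)
  qed
  have "approx_ratio n J \<le> measure_pmf.expectation (J UH) (welfare n UH) / Max (welfare n UH ` outcomes n)"
    unfolding approx_ratio_def
    by (rule cInf_lower) (use UHp ratio_nonneg[OF _ mech] in \<open>auto intro!: bdd_belowI[of _ 0]\<close>)
  also have "\<dots> \<le> 4 / (real k / 2)"
    using Eub Enn Mlb kpos JUH by (intro frac_le) auto
  also have "\<dots> = 8 / real k" by simp
  also have "\<dots> = 16 / (2 * real k)" by simp
  also have "\<dots> \<le> 16 / sqrt (real n)"
    using ks n1 kpos by (intro divide_left_mono) auto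
  finally show ?thesis .
qed

theorem lemma8:
  shows "\<exists>C>0. \<forall>n\<ge>1. \<forall>J. mechanism n J \<and> ordinal n J \<longrightarrow>
            approx_ratio n J \<le> C / sqrt (real n)"
  by (rule exI[of _ 16]) (auto intro: main_bound)

end
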